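(* (1) The groups $\mathrm{Aut}(Q_D)$ and $\mathrm{Aut}(Q_W)$ are each conjugate in $GL(4,\mathbb R)$ to the Lorentz group $O(3,1)=\mathrm{Aut}(Q_{\mathcal L})$; explicitly $\mathrm{Aut}(Q_D)=\mathbf J_0^{-1}O(3,1)\mathbf J_0$ and $\mathrm{Aut}(Q_W)=\mathbf A^{-1}O(3,1)\mathbf A$ where $\mathbf J_0=\tfrac12\begin{pmatrix}1&1&1&1\\1&1&-1&-1\\1&-1&1&-1\\1&-1&-1&1\end{pmatrix}$ and $\mathbf A=\begin{pmatrix}2&1&0&0\\2&-1&0&0\\0&0&1&1\\0&0&-1&1\end{pmatrix}$. (2) For any two ordered, oriented Descartes configurations $\mathcal D,\mathcal D'$ there is a unique $\mathbf U\in\mathrm{Aut}(Q_D)$ with $\mathbf U\mathbf W_{\mathcal D}=\mathbf W_{\mathcal D'}$; in particular $\mathbf W\mapsto\mathbf U\mathbf W$ defines a transitive left action of $\mathrm{Aut}(Q_D)$ on $\mathcal M_{\mathbb D}$. (3) For any two ordered, oriented Descartes configurations $\mathcal D,\mathcal D'$ there is a unique $\mathbf V\in\mathrm{Aut}(Q_W)$ with $\mathbf W_{\mathcal D}\mathbf V^{-1}=\mathbf W_{\mathcal D'}$; in particular $\mathbf W\mapsto \mathbf W\mathbf V^{-1}$ defines a transitive right action of $\mathrm{Aut}(Q_W)$ on $\mathcal M_{\mathbb D}$. (4) These two actions on $\mathcal M_{\mathbb D}$ commute.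
   Context: Oriented circles/lines, interiors, and (ordered, oriented) Descartes configurations: an oriented circle of radius $r$ has oriented curvature $b=\pm1/r$ ($+$ if its normal points inward, in which case its interior is the open disk; $-$ otherwise, interior the open exterior); an oriented line has curvature $0$, a unit normal $\mathbf h$, and interior the open half-plane into which $\mathbf h$ points. A Descartes configuration is four mutually tangent circles/lines with six distinct tangency points (parallel lines tangent at $\infty$); it is oriented if the interiors are pairwise disjoint, or become so after reversing all orientations. Augmented curvature-center coordinates of an oriented circle with center $\mathbf c=(c_1,c_2)$ and oriented radius $r$ ($r>0$ iff the interior is the bounded disk): $\mathbf w(C)=\big((|\mathbf c|^2-r^2)/r,\;1/r,\;c_1/r,\;c_2/r\big)$; of the oriented line $\{\mathbf x:\mathbf x\cdot\mathbf h=m\}$ with interior-pointing unit normal $\mathbf h$: $\mathbf w(C)=(2m,0,h_1,h_2)$. For an ordered, oriented Descartes configuration $\mathcal D=(C_1,\dots,C_4)$, $\mathbf W_{\mathcal D}$ is the $4\times4$ matrix with rows $\mathbf w(C_i)$. $\mathbf Q_D=\mathbf I-\frac12\mathbf 1\mathbf 1^T$; $\mathbf Q_W=\begin{pmatrix}0&-4&0&0\\-4&0&0&0\\0&0&2&0\\0&0&0&2\end{pmatrix}$; $\mathbf Q_{\mathcal L}=\mathrm{diag}(-1,1,1,1)$. For a symmetric matrix $\mathbf Q$, $\mathrm{Aut}(Q)=\{\mathbf U\in GL(4,\mathbb R):\mathbf U^T\mathbf Q\mathbf U=\mathbf Q\}$. Known fact (Augmented Euclidean Descartes Theorem): $\mathcal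 D\mapsto\mathbf W_{\mathcal D}$ is a bijection from the set of ordered, oriented Descartes configurations onto $\mathcal M_{\mathbb D}:=\{\mathbf W\in M_4(\mathbb R):\mathbf W^T\mathbf Q_D\mathbf W=\mathbf Q_W\}$. *)

theory Defs
  imports "HOL-Analysis.Analysis"
begin

text \<open>OCirc c r : circle with centre c and oriented (signed, nonzero) radius r;
  r > 0 means the interior is the open disk, r < 0 means the interior is the open exterior.
  OLine h m : the line {x. x \<bullet> h = m} with interior-pointing unit normal h.\<close>
datatype ocircle = OCirc "real^2" real | OLine "real^2" real

fun ocircle_wf :: "ocircle \<Rightarrow> bool" where
  "ocircle_wf (OCirc c r) = (r \<noteq> 0)"
| "ocircle_wf (OLine h m) = (norm h = 1)"

fun oc_points :: "ocircle \<Rightarrow> (real^2) set" where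
  "oc_points (OCirc c r) = sphere c \<bar>r\<bar>"
| "oc_points (OLine h m) = {x. x \<bullet> h = m}"

fun oc_interior :: "ocircle \<Rightarrow> (real^2) set" where
  "oc_interior (OCirc c r) = (if r > 0 then ball c r else {x. dist x c > \<bar>r\<bar>})"
| "oc_interior (OLine h m) = {x. x \<bullet> h > m}"

fun oc_reverse :: "ocircle \<Rightarrow> ocircle" where
  "oc_reverse (OCirc c r) = OCirc c (- r)"
| "oc_reverse (OLine h m) = OLine (- h) (- m)"

fun is_line :: "ocircle \<Rightarrow> bool" where
  "is_line (OCirc c r) = False"
| "is_line (OLine h m) = True"

text \<open>Tangency: two distinct parallel lines are tangent (at infinity); otherwise
  (at least one genuine circle) tangency means the two point sets meet in exactly one point.\<close>
definition oc_tangent :: "ocircle \<Rightarrow> ocircle \<Rightarrow> bool" where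
  "oc_tangent C1 C2 =
     (if is_line C1 \<and> is_line C2
      then (\<exists>h m h' m'. C1 = OLine h m \<and> C2 = OLine h' m' \<and> (h' = h \<or> h' = - h)
                          \<and> oc_points C1 \<inter> oc_points C2 = {})
      else (\<exists>!p. p \<in> oc_points C1 \<inter> oc_points C2))"

text \<open>Tangency point, in the plane extended by the point at infinity (None).\<close>
definition oc_tangency_point :: "ocircle \<Rightarrow> ocircle \<Rightarrow> (real^2) option" where
  "oc_tangency_point C1 C2 =
     (if is_line C1 \<and> is_line C2 then None
      else Some (THE p. p \<in> oc_points C1 \<inter> oc_points C2))"

definition descartes_config :: "(4 \<Rightarrow> ocircle) \<Rightarrow> bool" where
  "descartes_config D \<longleftrightarrow>
     (\<forall>i. ocircle_wf (D i)) \<and>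
     (\<forall>i j. i \<noteq> j \<longrightarrow> oc_tangent (D i) (D j)) \<and>
     (\<forall>i j k l. i \<noteq> j \<longrightarrow> k \<noteq> l \<longrightarrow> {i, j} \<noteq> {k, l} \<longrightarrow>
        oc_tangency_point (D i) (D j) \<noteq> oc_tangency_point (D k) (D l))"

definition oriented_descartes_config :: "(4 \<Rightarrow> ocircle) \<Rightarrow> bool" where
  "oriented_descartes_config D \<longleftrightarrow>
     descartes_config D \<and>
     ((\<forall>i j. i \<noteq> j \<longrightarrow> oc_interior (D i) \<inter> oc_interior (D j) = {}) \<or>
      (\<forall>i j. i \<noteq> j \<longrightarrow>
          oc_interior (oc_reverse (D i)) \<inter> oc_interior (oc_reverse (D j)) = {}))"

fun aug_coords :: "ocircle \<Rightarrow> real^4" where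
  "aug_coords (OCirc c r) = vector [(c \<bullet> c - r\<^sup>2) / r, 1 / r, c$1 / r, c$2 / r]"
| "aug_coords (OLine h m) = vector [2 * m, 0, h$1, h$2]"

definition W_matrix :: "(4 \<Rightarrow> ocircle) \<Rightarrow> real^4^4" where
  "W_matrix D = (\<chi> i. aug_coords (D i))"

definition Q_D :: "real^4^4" where
  "Q_D = mat 1 - (\<chi> i j. 1 / 2)"

definition Q_W :: "real^4^4" where
  "Q_W = vector [vector [0, -4, 0, 0], vector [-4, 0, 0, 0], vector [0, 0, 2, 0], vector [0, 0, 0, 2]]"

definition Q_L :: "real^4^4" where
  "Q_L = vector [vector [-1, 0, 0, 0], vector [0, 1, 0, 0], vector [0, 0, 1, 0], vector [0, 0, 0, 1]]"

definition Aut :: "real^4^4 \<Rightarrow> (real^4^4) set" where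
  "Aut Q = {U. invertible U \<and> transpose U ** Q ** U = Q}"

definition J0 :: "real^4^4" where
  "J0 = (1 / 2) *\<^sub>R vector [vector [1, 1, 1, 1], vector [1, 1, -1, -1],
                            vector [1, -1, 1, -1], vector [1, -1, -1, 1]]"

definition A_mat :: "real^4^4" where
  "A_mat = vector [vector [2, 1, 0, 0], vector [2, -1, 0, 0], vector [0, 0, 1, 1], vector [0, 0, -1, 1]]"

definition M_D :: "(real^4^4) set" where
  "M_D = {W. transpose W ** Q_D ** W = Q_W}"

end

theory Submission
  imports Defs
begin

lemma vector_4 [simp]:
 "(vector [x,y,z,w] ::('a::zero)^4)$1 = x"
 "(vector [x,y,z,w] ::('a::zero)^4)$2 = y"
 "(vector [x,y,z,w] ::('a::zero)^4)$3 = z"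
 "(vector [x,y,z,w] ::('a::zero)^4)$4 = w"
  unfolding vector_def by simp_all

lemmas mat_simps = vec_eq_iff forall_4 matrix_matrix_mult_def transpose_def sum_4 mat_def

definition QWi :: "real^4^4" where
  "QWi = vector [vector [0, -1/4, 0, 0], vector [-1/4, 0, 0, 0], vector [0, 0, 1/2, 0], vector [0, 0, 0, 1/2]]"

definition A_inv :: "real^4^4" where
  "A_inv = vector [vector [1/4, 1/4, 0, 0], vector [1/2, -1/2, 0, 0], vector [0, 0, 1/2, -1/2], vector [0, 0, 1/2, 1/2]]"

lemma QD_QD: "Q_D ** Q_D = mat 1"
  by (simp add: mat_simps Q_D_def)
lemma QW_QWi: "Q_W ** QWi = mat 1"
  by (simp add: mat_simps Q_W_def QWi_def)
lemma QWi_QW: "QWi ** Q_W = mat 1"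
  by (simp add: mat_simps Q_W_def QWi_def)
lemma J0_J0: "J0 ** J0 = mat 1"
  by (simp add: mat_simps J0_def)
lemma A_Ainv: "A_mat ** A_inv = mat 1"
  by (simp add: mat_simps A_mat_def A_inv_def)
lemma Ainv_A: "A_inv ** A_mat = mat 1"
  by (simp add: mat_simps A_mat_def A_inv_def)
lemma J0_QL: "transpose J0 ** Q_L ** J0 = Q_D"
  by (simp add: mat_simps J0_def Q_L_def Q_D_def)
lemma A_QL: "transpose A_mat ** Q_L ** A_mat = Q_W"
  by (simp add: mat_simps A_mat_def Q_L_def Q_W_def)
type_synonym m4 = "real^4^4"

lemma inv_props: fixes A :: m4 assumes "invertible A"
  shows "A ** matrix_inv A = mat 1" "matrix_inv A ** A = mat 1"
proof -
  have "\<exists>A'. A ** A' = mat 1 \<and> A' ** A = mat 1" using assms unfolding invertible_def by blast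
  hence "A ** matrix_inv A = mat 1 \<and> matrix_inv A ** A = mat 1"
    unfolding matrix_inv_def by (rule someI_ex)
  thus "A ** matrix_inv A = mat 1" "matrix_inv A ** A = mat 1" by auto
qed

lemma inv_unique: fixes A B :: m4 assumes "A ** B = mat 1" shows "matrix_inv A = B"
proof -
  have i: "invertible A" using assms invertible_right_inverse by blast
  have "matrix_inv A = matrix_inv A ** (A ** B)" using assms by simp
  also have "\<dots> = (matrix_inv A ** A) ** B" by (simp add: matrix_mul_assoc)
  also have "\<dots> = B" using inv_props(2)[OF i] by simp
  finally show ?thesis .
qed

lemma inv_unique2: fixes A B :: m4 assumes "B ** A = mat 1" shows "matrix_inv A = B"
  using assms inv_unique matrix_left_right_inverse by blast

lemma rinv_assoc: fixes A B Y :: m4 assumes "A ** B = mat 1" shows "A ** (B ** Y) = Y"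
  by (metis assms matrix_mul_assoc matrix_mul_lid)

lemma transpose_inv1: fixes A B :: m4 assumes "A ** B = mat 1"
  shows "transpose B ** transpose A = mat 1"
  by (metis assms matrix_transpose_mul transpose_mat)

lemma conj_lemma:
  fixes P Pi Q QL :: m4
  assumes PPi: "P ** Pi = mat 1" and PQ: "transpose P ** QL ** P = Q"
  shows "Aut Q = (\<lambda>U. matrix_inv P ** U ** P) ` Aut QL"
proof -
  have PiP: "Pi ** P = mat 1" using PPi matrix_left_right_inverse by blast
  have mi: "matrix_inv P = Pi" by (rule inv_unique[OF PPi])
  have t1: "transpose Pi ** transpose P = mat 1" using transpose_inv1[OF PPi] .
  have t2: "transpose P ** transpose Pi = mat 1" using transpose_inv1[OF PiP] .
  have invP: "invertible P" "invertible Pi" using PPi PiP invertible_def by blast+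
  show ?thesis
  proof (intro set_eqI iffI)
    fix V assume "V \<in> Aut Q"
    hence iV: "invertible V" and V: "transpose V ** Q ** V = Q" unfolding Aut_def by auto
    define U where "U = P ** V ** Pi"
    have "invertible U" unfolding U_def using iV invP invertible_mult by blast
    moreover have "transpose U ** QL ** U = QL"
    proof -
      have "transpose U ** QL ** U = transpose Pi ** (transpose V ** (transpose P ** QL ** P) ** V) ** Pi"
        unfolding U_def by (simp add: matrix_transpose_mul matrix_mul_assoc)
      also have "\<dots> = transpose Pi ** Q ** Pi" using V PQ by simp
      also have "\<dots> = (transpose Pi ** transpose P) ** QL ** (P ** Pi)"
        unfolding PQ[symmetric] by (simp add: matrix_mul_assoc)
      also have "\<dots> = QL" using t1 PPi by simp
      finally show ?thesis .
    qed
    ultimately have "U \<in> Aut QL" unfolding Aut_def by simp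
    moreover have "V = matrix_inv P ** U ** P"
    proof -
      have "Pi ** (P ** V ** Pi) ** P = (Pi ** P) ** V ** (Pi ** P)" by (simp add: matrix_mul_assoc)
      thus ?thesis unfolding mi U_def PiP by simp
    qed
    ultimately show "V \<in> (\<lambda>U. matrix_inv P ** U ** P) ` Aut QL" by blast
  next
    fix V assume "V \<in> (\<lambda>U. matrix_inv P ** U ** P) ` Aut QL"
    then obtain U where U: "U \<in> Aut QL" and VU: "V = Pi ** U ** P" unfolding mi by blast
    hence iU: "invertible U" and U': "transpose U ** QL ** U = QL" unfolding Aut_def by auto
    have "invertible V" unfolding VU using iU invP invertible_mult by blast
    moreover have "transpose V ** Q ** V = Q"
    proof -
      have "transpose V ** Q ** V = transpose P ** (transpose U ** ((transpose Pi ** transpose P) ** QL ** (P ** Pi)) ** U) ** P"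
        unfolding VU PQ[symmetric] by (simp add: matrix_transpose_mul matrix_mul_assoc)
      also have "\<dots> = transpose P ** QL ** P" using t1 PPi U' by simp
      finally show ?thesis using PQ by simp
    qed
    ultimately show "V \<in> Aut Q" unfolding Aut_def by simp
  qed
qed


lemma MD_inv: assumes "W \<in> M_D" shows "invertible W"
proof -
  have "transpose W ** Q_D ** W = Q_W" using assms unfolding M_D_def by simp
  hence "(QWi ** transpose W ** Q_D) ** W = mat 1"
    using QWi_QW by (metis matrix_mul_assoc)
  thus ?thesis using invertible_left_inverse by blast
qed

lemma MD_eq: "W \<in> M_D \<Longrightarrow> transpose W ** Q_D ** W = Q_W" unfolding M_D_def by simp

lemma left_trans: assumes W: "W \<in> M_D" and W': "W' \<in> M_D"
  shows "\<exists>!U. U \<in> Aut Q_D \<and> U ** W = W'"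
proof -
  have iW: "invertible W" "invertible W'" using MD_inv W W' by auto
  note Wi = inv_props[OF iW(1)]
  define U where "U = W' ** matrix_inv W"
  have UW: "U ** W = W'" unfolding U_def by (simp add: matrix_mul_assoc[symmetric] Wi)
  have "invertible U" unfolding U_def using iW invertible_mult
    by (metis Wi(1) Wi(2) invertible_def)
  moreover have "transpose U ** Q_D ** U = Q_D"
  proof -
    have "transpose U ** Q_D ** U = transpose (matrix_inv W) ** (transpose W' ** Q_D ** W') ** matrix_inv W"
      unfolding U_def by (simp add: matrix_transpose_mul matrix_mul_assoc)
    also have "\<dots> = transpose (matrix_inv W) ** (transpose W ** Q_D ** W) ** matrix_inv W"
      using MD_eq[OF W] MD_eq[OF W'] by simp
    also have "\<dots> = (transpose (matrix_inv W) ** transpose W) ** Q_D ** (W ** matrix_inv W)"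
      by (simp add: matrix_mul_assoc)
    also have "\<dots> = Q_D" using transpose_inv1[OF Wi(1)] Wi(1) by simp
    finally show ?thesis .
  qed
  ultimately have "U \<in> Aut Q_D" unfolding Aut_def by simp
  moreover have "U2 = U" if "U2 ** W = W'" for U2
  proof -
    have "U2 = U2 ** (W ** matrix_inv W)" using Wi by simp
    also have "\<dots> = U" unfolding U_def using that by (simp add: matrix_mul_assoc)
    finally show ?thesis .
  qed
  ultimately show ?thesis using UW by blast
qed

lemma left_closed: assumes "U \<in> Aut Q_D" "W \<in> M_D" shows "U ** W \<in> M_D"
proof -
  have U: "transpose U ** Q_D ** U = Q_D" using assms(1) unfolding Aut_def by simp
  have "transpose (U ** W) ** Q_D ** (U ** W) = transpose W ** (transpose U ** Q_D ** U) ** W"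
    by (simp add: matrix_transpose_mul matrix_mul_assoc)
  thus ?thesis using U MD_eq[OF assms(2)] unfolding M_D_def by simp
qed

lemma right_trans: assumes W: "W \<in> M_D" and W': "W' \<in> M_D"
  shows "\<exists>!V. V \<in> Aut Q_W \<and> W ** matrix_inv V = W'"
proof -
  have iW: "invertible W" "invertible W'" using MD_inv W W' by auto
  note Wi = inv_props[OF iW(1)] and Wi' = inv_props[OF iW(2)]
  define V where "V = matrix_inv W' ** W"
  have "V ** (matrix_inv W ** W') = mat 1" unfolding V_def
    by (metis Wi(1) Wi'(2) matrix_mul_assoc matrix_mul_lid)
  hence mV: "matrix_inv V = matrix_inv W ** W'" by (rule inv_unique)
  have WV: "W ** matrix_inv V = W'" unfolding mV by (simp add: matrix_mul_assoc Wi)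
  have iV: "invertible V" unfolding V_def
    by (metis Wi(1) Wi(2) Wi'(1) Wi'(2) invertible_def invertible_mult)
  moreover have "transpose V ** Q_W ** V = Q_W"
  proof -
    have "transpose V ** Q_W ** V = transpose W ** (transpose (matrix_inv W') ** (transpose W' ** Q_D ** W') ** matrix_inv W') ** W"
      unfolding V_def MD_eq[OF W'] by (simp add: matrix_transpose_mul matrix_mul_assoc)
    also have "transpose (matrix_inv W') ** (transpose W' ** Q_D ** W') ** matrix_inv W'
       = (transpose (matrix_inv W') ** transpose W') ** Q_D ** (W' ** matrix_inv W')"
      by (simp add: matrix_mul_assoc)
    also have "\<dots> = Q_D" using transpose_inv1[OF Wi'(1)] Wi'(1) by simp
    finally show ?thesis using MD_eq[OF W] by simp
  qed
  ultimately have "V \<in> Aut Q_W" unfolding Aut_def by simp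
  moreover have "V2 = V" if "V2 \<in> Aut Q_W" "W ** matrix_inv V2 = W'" for V2
  proof -
    have iV2: "invertible V2" using that unfolding Aut_def by simp
    have "matrix_inv V2 = matrix_inv W ** W'"
      using that(2) by (metis Wi(2) matrix_mul_assoc matrix_mul_lid)
    hence "matrix_inv V2 = matrix_inv V" using mV by simp
    hence "V2 ** matrix_inv V = mat 1" using inv_props(1)[OF iV2] by simp
    hence "matrix_inv (matrix_inv V) = V2" by (rule inv_unique2)
    moreover have "matrix_inv (matrix_inv V) = V" using inv_props(1)[OF iV] by (rule inv_unique2)
    ultimately show ?thesis by simp
  qed
  ultimately show ?thesis using WV by blast
qed

lemma right_closed: assumes "V \<in> Aut Q_W" "W \<in> M_D" shows "W ** matrix_inv V \<in> M_D"
proof -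
  have iV: "invertible V" and V: "transpose V ** Q_W ** V = Q_W" using assms(1) unfolding Aut_def by auto
  note Vi = inv_props[OF iV]
  have "transpose (W ** matrix_inv V) ** Q_D ** (W ** matrix_inv V) = transpose (matrix_inv V) ** (transpose W ** Q_D ** W) ** matrix_inv V"
    by (simp add: matrix_transpose_mul matrix_mul_assoc)
  also have "\<dots> = transpose (matrix_inv V) ** (transpose V ** Q_W ** V) ** matrix_inv V"
    using MD_eq[OF assms(2)] V by simp
  also have "\<dots> = (transpose (matrix_inv V) ** transpose V) ** Q_W ** (V ** matrix_inv V)"
    by (simp add: matrix_mul_assoc)
  also have "\<dots> = Q_W" using transpose_inv1[OF Vi(1)] Vi(1) by simp
  finally show ?thesis unfolding M_D_def by simp
qed

lemma inv_mat1: "matrix_inv (mat 1 :: m4) = mat 1"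
  by (rule inv_unique) simp

lemma inv_comp: assumes "V1 \<in> Aut Q_W" "V2 \<in> Aut Q_W"
  shows "matrix_inv (V2 ** V1) = matrix_inv V1 ** matrix_inv V2"
proof -
  have "invertible V1" "invertible V2" using assms unfolding Aut_def by auto
  note a = inv_props[OF this(1)] inv_props[OF this(2)]
  have "(V2 ** V1) ** (matrix_inv V1 ** matrix_inv V2) = mat 1"
    by (metis a matrix_mul_assoc matrix_mul_lid)
  thus ?thesis by (rule inv_unique)
qed


definition Bf :: "real^4 \<Rightarrow> real^4 \<Rightarrow> real" where
  "Bf x y = -(1/4)*(x$1*y$2 + x$2*y$1) + 1/2*(x$3*y$3 + x$4*y$4)"

lemma Bf_sym: "Bf x y = Bf y x" unfolding Bf_def by (simp add: algebra_simps)
lemma Bf_neg: "Bf (-x) (-y) = Bf x y" unfolding Bf_def by simp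

lemma inner2: "(a::real^2) \<bullet> b = a$1*b$1 + a$2*b$2"
  by (simp add: inner_vec_def sum_2)

lemma dist2sq: "(dist (a::real^2) b)^2 = (a$1-b$1)^2 + (a$2-b$2)^2"
proof -
  have "(dist a b)^2 = (a - b) \<bullet> (a - b)" by (simp add: dist_norm power2_norm_eq_inner)
  thus ?thesis by (simp add: inner2 power2_eq_square)
qed

lemma Bf_cc: assumes "r \<noteq> 0" "r' \<noteq> 0"
  shows "Bf (aug_coords (OCirc c r)) (aug_coords (OCirc c' r')) = (r^2 + r'^2 - (dist c c')^2) / (4*r*r')"
  using assms unfolding Bf_def dist2sq by (simp add: inner2 field_simps power2_eq_square)

lemma Bf_cl: assumes "r \<noteq> 0"
  shows "Bf (aug_coords (OCirc c r)) (aug_coords (OLine h m)) = (c \<bullet> h - m) / (2*r)"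
  using assms unfolding Bf_def by (simp add: inner2 field_simps)

lemma Bf_ll: "Bf (aug_coords (OLine h m)) (aug_coords (OLine h' m')) = (h \<bullet> h') / 2"
  unfolding Bf_def by (simp add: inner2 field_simps)

lemma Bf_self: assumes "ocircle_wf C" shows "Bf (aug_coords C) (aug_coords C) = 1/2"
proof (cases C)
  case (OCirc c r)
  then show ?thesis using assms Bf_cc[of r r c c] by (simp add: field_simps power2_eq_square)
next
  case (OLine h m)
  hence "h \<bullet> h = 1" using assms by (simp add: power2_norm_eq_inner[symmetric])
  then show ?thesis using OLine Bf_ll by simp
qed

lemma aug_rev: "aug_coords (oc_reverse C) = - aug_coords C"
  by (cases C) (simp_all add: vec_eq_iff forall_4 field_simps power2_eq_square)

lemma cc_pos: fixes c c' p :: "real^2"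
  assumes "r > 0" "r' > 0" "ball c r \<inter> ball c' r' = {}" "dist c p = r" "dist c' p = r'"
  shows "dist c c' = r + r'"
proof (rule ccontr)
  assume ne: "dist c c' \<noteq> r + r'"
  have "dist c c' \<le> r + r'" using assms dist_triangle[of c c' p] by (simp add: dist_commute)
  hence lt: "dist c c' < r + r'" using ne by simp
  define t where "t = r / (r + r')"
  define x where "x = c + t *\<^sub>R (c' - c)"
  have t0: "0 < t" "t < 1" using assms unfolding t_def by (auto simp: field_simps)
  have "dist c x = t * dist c c'" unfolding x_def using t0 by (simp add: dist_norm norm_minus_commute)
  also have "\<dots> < r"
  proof -
    have "t * dist c c' \<le> t * (r + r')" using lt t0 by (intro mult_left_mono) auto
    moreover have "t * (r + r') = r" unfolding t_def using assms by simp
    ultimately show ?thesis using lt t0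
      by (smt (verit, best) mult_strict_left_mono)
  qed
  finally have x1: "x \<in> ball c r" by simp
  have xc: "x - c' = (1 - t) *\<^sub>R (c - c')" unfolding x_def by (simp add: algebra_simps)
  have "dist c' x = norm (x - c')" by (simp add: dist_norm norm_minus_commute)
  also have "\<dots> = norm ((1 - t) *\<^sub>R (c - c'))" unfolding xc ..
  also have "\<dots> = (1 - t) * dist c c'" using t0 by (simp add: dist_norm)
  also have "\<dots> < r'"
  proof -
    have "(1 - t) * (r + r') = r'" unfolding t_def using assms by (simp add: field_simps)
    thus ?thesis using lt t0 by (smt (verit, best) mult_strict_left_mono)
  qed
  finally have "x \<in> ball c' r'" by simp
  thus False using x1 assms(3) by blast
qed

lemma cc_mix: fixes c c' p :: "real^2"
  assumes "r > 0" "R > 0" "ball c r \<inter> {x. dist x c' > R} = {}" "dist c p = r" "dist c' p = R"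
  shows "dist c c' = R - r"
proof -
  have "ball c r \<subseteq> cball c' R" using assms(3) by (auto simp: dist_commute)
  hence "dist c c' + r \<le> R \<or> r \<le> 0" using ball_subset_cball_iff by blast
  hence "dist c c' + r \<le> R" using assms(1) by linarith
  moreover have "R \<le> dist c c' + r" using assms dist_triangle[of c' p c] by (simp add: dist_commute)
  ultimately show ?thesis by simp
qed

lemma cc_neg: fixes c c' :: "real^2"
  shows "{x. dist x c > a} \<inter> {x. dist x c' > b} \<noteq> {}"
proof -
  define t where "t = \<bar>a\<bar> + \<bar>b\<bar> + dist c c' + 1"
  define x where "x = c + t *\<^sub>R axis 1 1"
  have "dist x c = t" unfolding x_def t_def by (simp add: dist_norm)
  moreover have "dist x c' \<ge> dist x c - dist c c'" using dist_triangle[of x c c'] dist_commute[of c c'] by linarith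
  ultimately have "dist x c > a" "dist x c' > b" unfolding t_def
    using zero_le_dist[of c c'] abs_ge_self[of a] abs_ge_self[of b] by linarith+
  hence "x \<in> {x. dist x c > a} \<inter> {x. dist x c' > b}" by auto
  thus ?thesis by blast
qed

lemma cl_pos: fixes c h p :: "real^2"
  assumes "r > 0" "norm h = 1" "ball c r \<inter> {x. x \<bullet> h > m} = {}" "dist c p = r" "p \<bullet> h = m"
  shows "c \<bullet> h - m = - r"
proof -
  have "c \<bullet> h + r \<le> m"
  proof (rule ccontr)
    assume "\<not> ?thesis"
    define t where "t = (r + max 0 (m - c \<bullet> h)) / 2"
    define x where "x = c + t *\<^sub>R h"
    have hh: "h \<bullet> h = 1" using assms(2) by (simp add: power2_norm_eq_inner[symmetric])
    have t0: "0 \<le> t" "t < r" "t > m - c \<bullet> h" using assms(1) \<open>\<not> c \<bullet> h + r \<le> m\<close> unfolding t_def by auto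
    have "dist c x = t" unfolding x_def using t0 assms(2) by (simp add: dist_norm)
    hence "x \<in> ball c r" using t0 by simp
    moreover have "x \<bullet> h = c \<bullet> h + t" unfolding x_def using hh by (simp add: inner_add_left)
    hence "x \<bullet> h > m" using t0 by linarith
    ultimately show False using assms(3) by blast
  qed
  moreover have "m - c \<bullet> h \<le> r"
  proof -
    have "m - c \<bullet> h = (p - c) \<bullet> h" using assms(5) by (simp add: inner_diff_left)
    also have "\<dots> \<le> norm (p - c) * norm h" by (rule norm_cauchy_schwarz)
    also have "\<dots> = r" using assms(2,4) by (simp add: dist_norm norm_minus_commute)
    finally show ?thesis .
  qed
  ultimately show ?thesis by simp
qed

lemma cl_neg: fixes c h :: "real^2"
  assumes "norm h = 1"
  shows "{x. dist x c > a} \<inter> {x. x \<bullet> h > m} \<noteq> {}"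
proof -
  have hh: "h \<bullet> h = 1" using assms by (simp add: power2_norm_eq_inner[symmetric])
  define t where "t = \<bar>a\<bar> + \<bar>m\<bar> + \<bar>c \<bullet> h\<bar> + 1"
  define x where "x = c + t *\<^sub>R h"
  have "dist x c = t" unfolding x_def t_def using assms by (simp add: dist_norm)
  moreover have "x \<bullet> h = c \<bullet> h + t" unfolding x_def using hh by (simp add: inner_add_left)
  ultimately have "x \<in> {x. dist x c > a} \<inter> {x. x \<bullet> h > m}" unfolding t_def by auto
  thus ?thesis by blast
qed

lemma ll_same: fixes h :: "real^2"
  assumes "norm h = 1"
  shows "{x. x \<bullet> h > m} \<inter> {x. x \<bullet> h > m'} \<noteq> {}"
proof -
  have hh: "h \<bullet> h = 1" using assms by (simp add: power2_norm_eq_inner[symmetric])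
  define x where "x = (\<bar>m\<bar> + \<bar>m'\<bar> + 1) *\<^sub>R h"
  have "x \<bullet> h = \<bar>m\<bar> + \<bar>m'\<bar> + 1" unfolding x_def using hh by simp
  hence "x \<in> {x. x \<bullet> h > m} \<inter> {x. x \<bullet> h > m'}" by auto
  thus ?thesis by blast
qed

lemma pair_cc:
  assumes "r \<noteq> 0" "r' \<noteq> 0" "oc_tangent (OCirc c r) (OCirc c' r')"
    "oc_interior (OCirc c r) \<inter> oc_interior (OCirc c' r') = {}"
  shows "Bf (aug_coords (OCirc c r)) (aug_coords (OCirc c' r')) = -1/2"
proof -
  obtain p where p: "dist c p = \<bar>r\<bar>" "dist c' p = \<bar>r'\<bar>"
    using assms(3) unfolding oc_tangent_def by auto
  have d: "(dist c c')^2 = (r + r')^2"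
  proof (cases "r > 0")
    case True
    show ?thesis
    proof (cases "r' > 0")
      case True
      have "dist c c' = r + r'" using cc_pos[of r r' c c' p] True \<open>r > 0\<close> assms(4) p by simp
      thus ?thesis by simp
    next
      case False
      hence "r' < 0" using assms by simp
      have "dist c c' = -r' - r" using cc_mix[of r "-r'" c c' p] \<open>r' < 0\<close> \<open>r > 0\<close> assms(4) p by simp
      hence "dist c c' = -(r + r')" by linarith
      thus ?thesis by (metis power2_minus)
    qed
  next
    case False
    hence "r < 0" using assms by simp
    show ?thesis
    proof (cases "r' > 0")
      case True
      have "dist c' c = -r - r'" using cc_mix[of r' "-r" c' c p] True \<open>r < 0\<close> assms(4) p
        by (simp add: Int_commute)
      hence "dist c c' = -(r + r')" by (simp add: dist_commute)
      thus ?thesis by (metis power2_minus)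
    next
      case False
      hence "r' < 0" using assms by simp
      thus ?thesis using cc_neg[of "\<bar>r\<bar>" c "\<bar>r'\<bar>" c'] assms(4) \<open>r < 0\<close> by simp
    qed
  qed
  show ?thesis unfolding Bf_cc[OF assms(1,2)] d using assms(1,2)
    by (simp add: field_simps power2_eq_square)
qed

lemma pair_cl:
  assumes "r \<noteq> 0" "norm h = 1" "oc_tangent (OCirc c r) (OLine h m)"
    "oc_interior (OCirc c r) \<inter> oc_interior (OLine h m) = {}"
  shows "Bf (aug_coords (OCirc c r)) (aug_coords (OLine h m)) = -1/2"
proof -
  obtain p where p: "dist c p = \<bar>r\<bar>" "p \<bullet> h = m"
    using assms(3) unfolding oc_tangent_def by auto
  have "r > 0"
  proof (rule ccontr)
    assume "\<not> r > 0"
    thus False using cl_neg[OF assms(2), of "\<bar>r\<bar>" c m] assms(4) by simp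
  qed
  hence "c \<bullet> h - m = - r" using cl_pos[of r h c m p] assms p by simp
  thus ?thesis unfolding Bf_cl[OF assms(1)] using assms(1) by simp
qed

lemma pair_ll:
  assumes "norm h = 1" "norm h' = 1" "oc_tangent (OLine h m) (OLine h' m')"
    "oc_interior (OLine h m) \<inter> oc_interior (OLine h' m') = {}"
  shows "Bf (aug_coords (OLine h m)) (aug_coords (OLine h' m')) = -1/2"
proof -
  have "h' = h \<or> h' = - h" using assms(3) unfolding oc_tangent_def by auto
  moreover have "h' \<noteq> h" using ll_same[OF assms(1), of m m'] assms(4) by auto
  ultimately have "h' = - h" by simp
  moreover have "h \<bullet> h = 1" using assms(1) by (simp add: power2_norm_eq_inner[symmetric])
  ultimately show ?thesis unfolding Bf_ll by simp
qed

lemma tangent_sym: "oc_tangent C C' \<Longrightarrow> oc_tangent C' C"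
  unfolding oc_tangent_def by (auto simp: Int_commute)

lemma pair:
  assumes "ocircle_wf C" "ocircle_wf C'" "oc_tangent C C'" "oc_interior C \<inter> oc_interior C' = {}"
  shows "Bf (aug_coords C) (aug_coords C') = -1/2"
proof (cases C)
  case (OCirc c r)
  show ?thesis
  proof (cases C')
    case (OCirc c' r')
    thus ?thesis using pair_cc assms \<open>C = OCirc c r\<close> by simp
  next
    case (OLine h' m')
    thus ?thesis using pair_cl assms \<open>C = OCirc c r\<close> by simp
  qed
next
  case (OLine h m)
  show ?thesis
  proof (cases C')
    case (OCirc c' r')
    thus ?thesis using pair_cl[of r' h c' m] assms \<open>C = OLine h m\<close> tangent_sym[OF assms(3)]
      by (simp add: Bf_sym Int_commute)
  next
    case (OLine h' m')
    thus ?thesis using pair_ll assms \<open>C = OLine h m\<close> by simp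
  qed
qed

lemma wf_rev: "ocircle_wf C \<Longrightarrow> ocircle_wf (oc_reverse C)"
  by (cases C) auto

lemma tangent_rev: "oc_tangent C C' \<Longrightarrow> oc_tangent (oc_reverse C) (oc_reverse C')"
proof -
  have pts: "oc_points (oc_reverse X) = oc_points X" for X
    by (cases X) (auto simp: inner_minus_right)
  have il: "is_line (oc_reverse X) = is_line X" for X by (cases X) auto
  assume t: "oc_tangent C C'"
  show ?thesis
  proof (cases "is_line C \<and> is_line C'")
    case True
    then obtain h m h' m' where "C = OLine h m" "C' = OLine h' m'" "h' = h \<or> h' = - h"
      "oc_points C \<inter> oc_points C' = {}" using t unfolding oc_tangent_def by auto
    thus ?thesis unfolding oc_tangent_def using pts by auto
  next
    case False
    have "oc_tangent (oc_reverse C) (oc_reverse C') \<longleftrightarrow> (\<exists>!p. p \<in> oc_points C \<inter> oc_points C')"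
      by (simp only: oc_tangent_def pts il False if_False)
    moreover have "oc_tangent C C' \<longleftrightarrow> (\<exists>!p. p \<in> oc_points C \<inter> oc_points C')"
      by (simp only: oc_tangent_def False if_False)
    ultimately show ?thesis using t by simp
  qed
qed

lemma W_entry: "(W ** QWi ** transpose W) $ i $ j = Bf (W$i) (W$j)"
  by (simp add: matrix_matrix_mult_def transpose_def sum_4 QWi_def Bf_def algebra_simps)

lemma QD_entry: "Q_D $ i $ j = (if i = j then 1 else 0) - 1/2"
  by (simp add: Q_D_def mat_def)

lemma MD_from_Bf:
  assumes "\<And>i j. Bf (W$i) (W$j) = (if i = j then 1 else 0) - 1/2"
  shows "W \<in> M_D"
proof -
  have e: "W ** QWi ** transpose W = Q_D"
    by (simp add: vec_eq_iff W_entry QD_entry assms)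
  define N where "N = QWi ** transpose W ** Q_D"
  have "W ** N = mat 1" unfolding N_def using e QD_QD by (metis matrix_mul_assoc)
  hence "N ** W = mat 1" using matrix_left_right_inverse by blast
  hence "Q_W ** (N ** W) = Q_W" by simp
  hence "(Q_W ** QWi) ** (transpose W ** Q_D ** W) = Q_W" unfolding N_def by (simp add: matrix_mul_assoc)
  thus ?thesis unfolding M_D_def QW_QWi by simp
qed

lemma descartes_MD: assumes "oriented_descartes_config D" shows "W_matrix D \<in> M_D"
proof (rule MD_from_Bf)
  fix i j
  have row: "W_matrix D $ k = aug_coords (D k)" for k unfolding W_matrix_def by simp
  have wf: "\<And>k. ocircle_wf (D k)" and tg: "\<And>k l. k \<noteq> l \<Longrightarrow> oc_tangent (D k) (D l)"
    using assms unfolding oriented_descartes_config_def descartes_config_def by auto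
  show "Bf (W_matrix D $ i) (W_matrix D $ j) = (if i = j then 1 else 0) - 1/2"
  proof (cases "i = j")
    case True thus ?thesis unfolding row using Bf_self wf by simp
  next
    case False
    have "(\<forall>i j. i \<noteq> j \<longrightarrow> oc_interior (D i) \<inter> oc_interior (D j) = {}) \<or>
      (\<forall>i j. i \<noteq> j \<longrightarrow> oc_interior (oc_reverse (D i)) \<inter> oc_interior (oc_reverse (D j)) = {})"
      using assms unfolding oriented_descartes_config_def by blast
    thus ?thesis
    proof
      assume "\<forall>i j. i \<noteq> j \<longrightarrow> oc_interior (D i) \<inter> oc_interior (D j) = {}"
      thus ?thesis unfolding row using pair[OF wf wf tg[OF False]] False by simp
    next
      assume "\<forall>i j. i \<noteq> j \<longrightarrow> oc_interior (oc_reverse (D i)) \<inter> oc_interior (oc_reverse (D j)) = {}"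
      hence "Bf (aug_coords (oc_reverse (D i))) (aug_coords (oc_reverse (D j))) = -1/2"
        using pair[OF wf_rev[OF wf] wf_rev[OF wf] tangent_rev[OF tg[OF False]]] False by simp
      thus ?thesis unfolding row aug_rev Bf_neg using False by simp
    qed
  qed
qed

theorem theorem3p3:
  shows
    \<comment> \<open>(1) conjugacy to the Lorentz group O(3,1) = Aut Q_L\<close>
    "(invertible J0 \<and> Aut Q_D = (\<lambda>U. matrix_inv J0 ** U ** J0) ` Aut Q_L \<and>
      invertible A_mat \<and> Aut Q_W = (\<lambda>U. matrix_inv A_mat ** U ** A_mat) ` Aut Q_L)
   \<and> \<comment> \<open>(2) left action of Aut Q_D\<close>
     (\<forall>D D'. oriented_descartes_config D \<longrightarrow> oriented_descartes_config D' \<longrightarrow>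
        (\<exists>!U. U \<in> Aut Q_D \<and> U ** W_matrix D = W_matrix D'))
   \<and> (\<forall>U\<in>Aut Q_D. \<forall>W\<in>M_D. U ** W \<in> M_D)
   \<and> (\<forall>W\<in>M_D. mat 1 ** W = W)
   \<and> (\<forall>U1\<in>Aut Q_D. \<forall>U2\<in>Aut Q_D. \<forall>W\<in>M_D. (U1 ** U2) ** W = U1 ** (U2 ** W))
   \<and> (\<forall>W\<in>M_D. \<forall>W'\<in>M_D. \<exists>U\<in>Aut Q_D. U ** W = W')
   \<and> \<comment> \<open>(3) action W \<mapsto> W V^-1 of Aut Q_W\<close>
     (\<forall>D D'. oriented_descartes_config D \<longrightarrow> oriented_descartes_config D' \<longrightarrow>
        (\<exists>!V. V \<in> Aut Q_W \<and> W_matrix D ** matrix_inv V = W_matrix D'))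
   \<and> (\<forall>V\<in>Aut Q_W. \<forall>W\<in>M_D. W ** matrix_inv V \<in> M_D)
   \<and> (\<forall>W\<in>M_D. W ** matrix_inv (mat 1) = W)
   \<and> (\<forall>V1\<in>Aut Q_W. \<forall>V2\<in>Aut Q_W. \<forall>W\<in>M_D.
        (W ** matrix_inv V1) ** matrix_inv V2 = W ** matrix_inv (V2 ** V1))
   \<and> (\<forall>W\<in>M_D. \<forall>W'\<in>M_D. \<exists>V\<in>Aut Q_W. W ** matrix_inv V = W')
   \<and> \<comment> \<open>(4) the two actions commute\<close>
     (\<forall>U\<in>Aut Q_D. \<forall>V\<in>Aut Q_W. \<forall>W\<in>M_D.
        (U ** W) ** matrix_inv V = U ** (W ** matrix_inv V))"
proof -
  have J0i: "matrix_inv J0 = J0" by (rule inv_unique[OF J0_J0])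
  have iJ: "invertible J0" using J0_J0 invertible_def by blast
  have iA: "invertible A_mat" using A_Ainv Ainv_A invertible_def by blast
  note c1 = conj_lemma[OF J0_J0 J0_QL] and c2 = conj_lemma[OF A_Ainv A_QL]
  show ?thesis
    apply (intro conjI)
    subgoal by (rule iJ)
    subgoal by (rule c1)
    subgoal by (rule iA)
    subgoal by (rule c2)
    subgoal using descartes_MD left_trans by blast
    subgoal using left_closed by blast
    subgoal by simp
    subgoal by (simp add: matrix_mul_assoc)
    subgoal using left_trans by blast
    subgoal using descartes_MD right_trans by blast
    subgoal using right_closed by blast
    subgoal using inv_mat1 by simp
    subgoal using inv_comp by (simp add: matrix_mul_assoc)
    subgoal using right_trans by blast
    subgoal by (simp add: matrix_mul_assoc)
    done
qed

end
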